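(* Define $V:\mathbb{R}\to\mathbb{R}$ by $V(x) = c_0$ for $x<1$ and $V(x) = c_0 - \frac{(x-1)^2}{2}$ for $x\ge 1$, where $c_0\in\mathbb{R}$ is the constant making $\int e^{-V}\,d\gamma = 1$. Then $x\mapsto V(x) + x^2/2$ is convex (i.e. $V''\ge -1$), $\sup V<\infty$, and there is no $L>0$ and no $L$-Lipschitz map $T:\mathbb{R}\to\mathbb{R}$ with $T_\#\gamma = e^{-V}\,d\gamma$.
   Context: $\gamma$ is the standard Gaussian measure on $\mathbb{R}$. The push-forward is $(T_\#\nu)(A)=\nu(T^{-1}(A))$ for Borel $A$. *)

theory Defs
  imports "HOL-Probability.Probability"
begin

definition gauss :: "real measure" where
  "gauss = density lborel (\<lambda>x. ennreal (std_normal_density x))"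

definition Vpot :: "real \<Rightarrow> real \<Rightarrow> real" where
  "Vpot c0 x = (if x < 1 then c0 else c0 - (x - 1)^2 / 2)"

end

theory Submission
  imports Defs
begin

lemma Vpot_meas[measurable]: "Vpot c0 \<in> borel_measurable borel"
  unfolding Vpot_def[abs_def] by measurable

lemma convex_part: "convex_on UNIV (\<lambda>x. Vpot c0 x + x^2 / 2)"
proof -
  have eq: "(\<lambda>x. Vpot c0 x + x^2 / 2) = (\<lambda>x. c0 + (x^2/2 - (max 0 (x - 1))^2 / 2))"
    by (rule ext) (auto simp: Vpot_def max_def power2_eq_square field_simps)
  define g where "g x = (if x < 1 then x^2/2 else x - 1/2)" for x :: real
  have g: "(x::real)^2/2 - (max 0 (x - 1))^2 / 2 = g x" for x
    by (auto simp: g_def max_def power2_eq_square field_simps)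
  have der: "(g has_real_derivative (min x 1)) (at x)" for x :: real
  proof -
    have d1: "((\<lambda>x::real. x^2/2) has_real_derivative y) (at y)" for y
      by (auto intro!: derivative_eq_intros)
    have d2: "((\<lambda>x::real. x - 1/2) has_real_derivative 1) (at y)" for y
      by (auto intro!: derivative_eq_intros)
    show ?thesis
    proof (cases "x < 1")
      case True
      have "((\<lambda>x::real. x^2/2) has_real_derivative x) (at x)" by (rule d1)
      then have "(g has_real_derivative x) (at x)"
        apply (rule has_field_derivative_transform_within_open[where S="{..<1}"])
        using True by (auto simp: g_def)
      then show ?thesis using True by (simp add: min_def)
    next
      case False
      show ?thesis
      proof (cases "x > 1")
        case True
        have "(g has_real_derivative 1) (at x)"
          using d2 apply (rule has_field_derivative_transform_within_open[where S="{1<..}"])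
          using True by (auto simp: g_def)
        then show ?thesis using True by (simp add: min_def)
      next
        case False2: False
        then have x1: "x = 1" using False by auto
        have gi: "g = (\<lambda>x. if x \<in> {..<1} then x^2/2 else x - 1/2)"
          by (auto simp: g_def fun_eq_iff)
        have cl: "closure {..<(1::real)} \<inter> closure {1..} = {1}" by auto
        have "(g has_derivative (if (1::real) \<in> {..<1} then (\<lambda>h. h * 1) else (\<lambda>h. h * 1)))
              (at 1 within ({..<1} \<union> {1..}))"
          unfolding gi
        proof (rule has_derivative_If_within_closures)
          have hh: "(\<lambda>h::real. h * 1) = (*) 1" by (rule ext) simp
          have e1: "((\<lambda>x::real. x^2/2) has_derivative (\<lambda>h. h * 1)) (at 1)"
            using d1[of 1] unfolding has_field_derivative_def hh by simp
          have e2: "((\<lambda>x::real. x - 1/2) has_derivative (\<lambda>h. h * 1)) (at 1)"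
            using d2[of 1] unfolding has_field_derivative_def hh by simp
          show "((\<lambda>x::real. x^2/2) has_derivative (\<lambda>h. h * 1)) (at 1 within {..<1} \<union> (closure {..<1} \<inter> closure {1..}))"
            using e1 by (rule has_derivative_at_withinI)
          show "((\<lambda>x::real. x - 1/2) has_derivative (\<lambda>h. h * 1)) (at 1 within {1..} \<union> (closure {..<1} \<inter> closure {1..}))"
            using e2 by (rule has_derivative_at_withinI)
        qed auto
        moreover have "{..<(1::real)} \<union> {1..} = UNIV" by auto
        moreover have hh2: "(*) (1::real) = (\<lambda>h. h)" by (rule ext) simp
        ultimately have "(g has_real_derivative 1) (at 1)"
          unfolding has_field_derivative_def hh2 by simp
        then show ?thesis using x1 by simp
      qed
    qed
  qed
  have "convex_on UNIV g"
    by (rule convex_on_realI[OF _ der]) (auto simp: min_def)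
  moreover have "(\<lambda>x. c0 + (x^2/2 - (max 0 (x - 1))^2 / 2)) = (\<lambda>x. g x + c0)"
    using g by (auto simp: fun_eq_iff)
  ultimately show ?thesis unfolding eq
    by (simp add: convex_on_add convex_on_const)
qed

lemma lborel_Ici_inf: "emeasure lborel {1::real..} = \<infinity>"
proof (rule ccontr)
  assume "emeasure lborel {1::real..} \<noteq> \<infinity>"
  then obtain r where r: "r \<ge> 0" "emeasure lborel {1::real..} = ennreal r"
    by (cases "emeasure lborel {1::real..}") auto
  have "emeasure lborel {1::real..2+r} \<le> emeasure lborel {1::real..}"
    by (rule emeasure_mono) auto
  then have "ennreal (1 + r) \<le> ennreal r" using r by simp
  then show False using r by (simp add: ennreal_le_iff)
qed

lemma gauss_sets: "sets gauss = sets borel"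
  by (simp add: gauss_def)

lemma no_lip:
  fixes T :: "real \<Rightarrow> real"
  assumes L: "L > 0" and lip: "L-lipschitz_on UNIV T"
    and eq: "distr gauss borel T = density gauss (\<lambda>x. ennreal (exp (- Vpot c0 x)))"
  shows False
proof -
  have Tm: "T \<in> borel_measurable borel"
    by (rule borel_measurable_continuous_onI[OF lipschitz_on_continuous_on[OF lip]])
  have Tm': "T \<in> measurable gauss borel"
    using Tm by (simp add: measurable_def gauss_sets space_borel gauss_def)
  have Te: "(\<lambda>x. exp (T x)) \<in> borel_measurable borel" using Tm by measurable
  define A where "A = (\<integral>\<^sup>+ x. ennreal (exp (T x)) \<partial>gauss)"
  have "A = (\<integral>\<^sup>+ y. ennreal (exp y) \<partial>(distr gauss borel T))"
    unfolding A_def by (subst nn_integral_distr[OF Tm']) auto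
  also have "\<dots> = (\<integral>\<^sup>+ y. ennreal (exp (- Vpot c0 y)) * ennreal (exp y) \<partial>gauss)"
    unfolding eq by (subst nn_integral_density) (auto simp: gauss_def)
  also have "\<dots> = (\<integral>\<^sup>+ y. ennreal (std_normal_density y) * (ennreal (exp (- Vpot c0 y)) * ennreal (exp y)) \<partial>lborel)"
    unfolding gauss_def by (subst nn_integral_density) auto
  also have "\<dots> \<ge> (\<integral>\<^sup>+ y. ennreal (exp (1/2 - c0) / sqrt (2*pi)) * indicator {1::real..} y \<partial>lborel)"
  proof (rule nn_integral_mono)
    fix y :: real assume "y \<in> space lborel"
    show "ennreal (exp (1/2 - c0) / sqrt (2*pi)) * indicator {1::real..} y
      \<le> ennreal (std_normal_density y) * (ennreal (exp (- Vpot c0 y)) * ennreal (exp y))"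
    proof (cases "y \<ge> 1")
      case True
      have "std_normal_density y * (exp (- Vpot c0 y) * exp y) = exp (- (y^2)/2 + (- Vpot c0 y) + y) / sqrt (2*pi)"
        unfolding std_normal_density_def exp_add by (simp add: divide_simps mult_ac)
      also have "- (y^2)/2 + (- Vpot c0 y) + y = 1/2 - c0"
        using True by (simp add: Vpot_def power2_eq_square field_simps)
      finally have "std_normal_density y * (exp (- Vpot c0 y) * exp y) = exp (1/2 - c0) / sqrt (2*pi)" .
      then show ?thesis using True
        by (simp add: ennreal_mult''[symmetric] indicator_def)
    qed (simp add: indicator_def)
  qed
  finally have "A \<ge> ennreal (exp (1/2 - c0) / sqrt (2*pi)) * emeasure lborel {1::real..}"
    by (simp add: nn_integral_cmult_indicator)
  then have Ainf: "A = \<infinity>"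
    by (simp add: lborel_Ici_inf ennreal_mult_top top_unique)
  define C where "C = exp (\<bar>T 0\<bar> + L^2) * sqrt 2"
  have "A = (\<integral>\<^sup>+ x. ennreal (std_normal_density x) * ennreal (exp (T x)) \<partial>lborel)"
    unfolding A_def gauss_def by (subst nn_integral_density) (auto intro: Te)
  also have "\<dots> \<le> (\<integral>\<^sup>+ x. ennreal (norm (C * normal_density 0 (sqrt 2) x)) \<partial>lborel)"
  proof (rule nn_integral_mono)
    fix x :: real assume "x \<in> space lborel"
    have "dist (T x) (T 0) \<le> L * dist x 0"
      using lip unfolding lipschitz_on_def by blast
    then have t1: "T x \<le> \<bar>T 0\<bar> + L * \<bar>x\<bar>" by (simp add: dist_real_def)
    have t2: "L * \<bar>x\<bar> - x^2/2 \<le> L^2 - x^2/4"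
    proof -
      have "0 \<le> (\<bar>x\<bar>/2 - L)^2" by simp
      then show ?thesis by (simp add: power2_eq_square field_simps)
    qed
    have "std_normal_density x * exp (T x) = exp (- (x^2)/2 + T x) / sqrt (2*pi)"
      unfolding std_normal_density_def exp_add by (simp add: divide_simps mult_ac)
    also have "\<dots> \<le> exp (\<bar>T 0\<bar> + L^2 - x^2/4) / sqrt (2*pi)"
    proof -
      have "- (x^2)/2 + T x \<le> \<bar>T 0\<bar> + L^2 - x^2/4"
      proof -
        define a where "a = L * \<bar>x\<bar>"
        define b where "b = (x::real)^2"
        have "T x \<le> \<bar>T 0\<bar> + a" "a - b/2 \<le> L^2 - b/4" using t1 t2 by (simp_all add: a_def b_def)
        then have "- b/2 + T x \<le> \<bar>T 0\<bar> + L^2 - b/4" by linarith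
        then show ?thesis by (simp add: b_def)
      qed
      then have "exp (- (x^2)/2 + T x) \<le> exp (\<bar>T 0\<bar> + L^2 - x^2/4)" by (rule exp_mono)
      then show ?thesis by (rule divide_right_mono) simp
    qed
    also have "\<dots> = C * normal_density 0 (sqrt 2) x"
    proof -
      have nd: "normal_density 0 (sqrt 2) x = exp (- (x^2)/4) / (sqrt 2 * sqrt (2*pi))"
        unfolding normal_density_def real_sqrt_mult[symmetric] by (simp add: mult_ac)
      have ee: "exp (\<bar>T 0\<bar> + L^2 - x^2/4) = exp (\<bar>T 0\<bar> + L^2) * exp (- (x^2)/4)"
        by (subst mult_exp_exp) simp
      show ?thesis unfolding C_def nd ee by simp
    qed
    finally have "std_normal_density x * exp (T x) \<le> C * normal_density 0 (sqrt 2) x" .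
    moreover have "C \<ge> 0" unfolding C_def by simp
    ultimately show "ennreal (std_normal_density x) * ennreal (exp (T x))
      \<le> ennreal (norm (C * normal_density 0 (sqrt 2) x))"
    proof -
      have "ennreal (std_normal_density x) * ennreal (exp (T x)) = ennreal (std_normal_density x * exp (T x))"
        by (rule ennreal_mult''[symmetric]) simp
      also have "\<dots> \<le> ennreal (C * normal_density 0 (sqrt 2) x)"
        by (rule ennreal_leI) fact
      also have "C * normal_density 0 (sqrt 2) x = norm (C * normal_density 0 (sqrt 2) x)"
        using \<open>C \<ge> 0\<close> by simp
      finally show ?thesis .
    qed
  qed
  also have "\<dots> < \<infinity>"
  proof -
    have "integrable lborel (\<lambda>x. C * normal_density 0 (sqrt 2) x)"
      by (intro integrable_mult_right integrable_normal_density) auto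
    then show ?thesis unfolding integrable_iff_bounded by (elim conjE)
  qed
  finally have "A < \<infinity>" .
  then show False using Ainf by simp
qed

theorem mainTheorem8:
  fixes c0 :: real
  assumes norm: "(\<integral>\<^sup>+ x. ennreal (exp (- Vpot c0 x)) \<partial>gauss) = 1"
  shows "convex_on UNIV (\<lambda>x. Vpot c0 x + x^2 / 2)
    \<and> bdd_above (range (Vpot c0))
    \<and> \<not> (\<exists>L>0. \<exists>T :: real \<Rightarrow> real. L-lipschitz_on UNIV T \<and>
            distr gauss borel T = density gauss (\<lambda>x. ennreal (exp (- Vpot c0 x))))"
proof (intro conjI)
  show "convex_on UNIV (\<lambda>x. Vpot c0 x + x^2 / 2)" by (rule convex_part)
  show "bdd_above (range (Vpot c0))"
    by (rule bdd_aboveI[where M=c0]) (auto simp: Vpot_def)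
  show "\<not> (\<exists>L>0. \<exists>T :: real \<Rightarrow> real. L-lipschitz_on UNIV T \<and>
            distr gauss borel T = density gauss (\<lambda>x. ennreal (exp (- Vpot c0 x))))"
    using no_lip by blast
qed

end
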